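(* For each prime $p$, we have $\mathcal U_p=\bigcup_{k\ge1}\mathcal U_{p,k}$.
   Context: For a prime $p$, $\mathcal U_p$ is the set of positive integers that divide $p^n+1$ for some positive integer $n$. For coprime integers $a,b$ with $b>0$, $\ell_a(b)$ is the multiplicative order of $a$ modulo $b$; $v_l(n)$ is the exponent of the prime $l$ in $n$. For a prime $p$ and positive integer $k$, $\mathcal U_{p,k}$ is the set of positive integers $d$ coprime to $p$ such that: for each odd prime $r\mid d$ we have $v_2(\ell_p(r))=k$; if $p>2$ and $k=1$ then $v_2(d)\le v_2(p+1)$; and if $p>2$ and $k>1$ then $v_2(d)\le 1$. *)

theory Defs
  imports "HOL-Number_Theory.Number_Theory"
begin

definition U :: "nat \<Rightarrow> nat set" where
  "U p = {d. d > 0 \<and> (\<exists>n>0. d dvd p ^ n + 1)}"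

definition Uk :: "nat \<Rightarrow> nat \<Rightarrow> nat set" where
  "Uk p k = {d. d > 0 \<and> coprime d p
      \<and> (\<forall>r. prime r \<and> odd r \<and> r dvd d \<longrightarrow> multiplicity 2 (ord r p) = k)
      \<and> (p > 2 \<and> k = 1 \<longrightarrow> multiplicity 2 d \<le> multiplicity 2 (p + 1))
      \<and> (p > 2 \<and> k > 1 \<longrightarrow> multiplicity 2 d \<le> 1)}"

end

theory Submission
  imports Defs
begin


lemma geo_int: fixes y :: int shows "(1+y) * (\<Sum>i<r. (-y)^i) = 1 - (-y)^r"
  by (induction r) (auto simp: algebra_simps)

lemma odd_pow_plus1: fixes x :: int assumes "odd n" shows "(x+1) dvd x^n+1"
proof -
  have "[x = -1] (mod x+1)" by (simp add: cong_iff_dvd_diff)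
  hence "[x^n = (-1)^n] (mod x+1)" by (rule cong_pow)
  hence "[x^n + 1 = (-1)^n + 1] (mod x+1)" by (rule cong_add) auto
  thus ?thesis using assms by (simp add: cong_0_iff)
qed

lemma lift_step: fixes y :: int assumes r: "odd r" and h: "[y = -1] (mod int r)"
  shows "int r dvd (\<Sum>i<r. (-y)^i)"
proof -
  have "[-y = 1] (mod int r)" using h by (metis cong_minus_minus_iff minus_minus)
  hence "[(\<Sum>i<r. (-y)^i) = (\<Sum>i<r. 1)] (mod int r)"
    by (intro cong_sum) (metis cong_pow power_one)
  hence "int r dvd (\<Sum>i<r. (-y)^i) - int r" by (simp add: cong_iff_dvd_diff)
  hence "int r dvd ((\<Sum>i<r. (-y)^i) - int r) + int r" by (rule dvd_add) auto
  thus ?thesis by simp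
qed

lemma L: fixes x :: int
  shows "odd m \<Longrightarrow> (\<forall>r. prime r \<longrightarrow> r dvd m \<longrightarrow> int r dvd x+1) \<Longrightarrow> int m dvd x^m + 1"
proof (induction m rule: less_induct)
  case (less m)
  show ?case
  proof (cases "m = 1")
    case True thus ?thesis by simp
  next
    case False
    with less.prems have "m > 1" by (cases m) auto
    then obtain r where r: "prime r" "r dvd m" using prime_factor_nat[of m] by auto
    then obtain m' where m: "m = r * m'" by blast
    have ro: "odd r" "odd m'" using less.prems m by auto
    have "r > 1" using r prime_gt_1_nat by blast
    have "m' > 0" using ro by (cases m') auto
    hence "m' < m" using m \<open>r > 1\<close> by auto
    have IH: "int m' dvd x^m' + 1"
      using less.IH[OF \<open>m' < m\<close> ro(2)] less.prems m by auto
    define y where "y = x^m'"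
    have "[x = -1] (mod int r)" using less.prems r by (simp add: cong_iff_dvd_diff)
    hence "[y = (-1)^m'] (mod int r)" unfolding y_def by (rule cong_pow)
    hence "[y = -1] (mod int r)" using ro by simp
    hence S: "int r dvd (\<Sum>i<r. (-y)^i)" using lift_step ro by blast
    have "y^r + 1 = (1+y) * (\<Sum>i<r. (-y)^i)" using geo_int[of y r] ro by simp
    moreover have "int m' * int r dvd (1+y) * (\<Sum>i<r. (-y)^i)"
      using IH S unfolding y_def by (simp add: mult_dvd_mono add.commute)
    ultimately have "int m dvd y^r+1" using m by (simp add: mult.commute)
    thus ?thesis unfolding y_def m by (simp add: power_mult mult.commute)
  qed
qed



lemma sq_cong: fixes p :: nat assumes "odd p"
  shows "[int p ^ 2 = 1] (mod 2 * (int p + 1))"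
proof -
  obtain t where t: "p = 2*t+1" using assms oddE by blast
  have "int p ^ 2 - 1 = 2 * (int p + 1) * int t" using t by (simp add: algebra_simps power2_eq_square)
  thus ?thesis by (simp add: cong_iff_dvd_diff)
qed

lemma odd_exp_cong: fixes p :: nat assumes "odd p" "odd n"
  shows "[int p ^ n + 1 = int p + 1] (mod 2 * (int p + 1))"
proof -
  obtain j where j: "n = 2*j+1" using assms(2) oddE by blast
  have "[(int p ^ 2)^j = 1^j] (mod 2 * (int p + 1))" by (rule cong_pow[OF sq_cong[OF assms(1)]])
  hence "[(int p ^ 2)^j * int p = 1^j * int p] (mod 2 * (int p + 1))" by (rule cong_mult[OF _ cong_refl])
  moreover have "int p ^ n = (int p ^ 2)^j * int p" by (simp only: j power_add power_mult power_one_right)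
  ultimately have "[int p ^ n = int p] (mod 2 * (int p + 1))" by simp
  thus ?thesis by (rule cong_add) auto
qed

lemma even_exp_cong: fixes p :: nat assumes "odd p" "even n"
  shows "[int p ^ n = 1] (mod 4)"
proof -
  obtain j where j: "n = 2*j" using assms(2) by blast
  have "2 dvd int p + 1" using assms(1) by simp
  then obtain c where "int p + 1 = 2 * c" by blast
  hence "4 dvd 2 * (int p + 1)" by simp
  hence "[int p ^ 2 = 1] (mod 4)" using sq_cong[OF assms(1)] cong_dvd_modulus by blast
  hence "[(int p ^ 2)^j = 1^j] (mod 4)" by (rule cong_pow)
  thus ?thesis using j by (simp add: power_mult)
qed



lemma dir1:
  fixes p d n :: nat
  assumes p: "prime p" and d: "d > 0" and n: "n > 0" and dv: "d dvd p^n + 1"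
  shows "d \<in> Uk p (multiplicity 2 n + 1)"
proof -
  define k where "k = multiplicity 2 n + 1"
  have cop: "coprime d p"
  proof (rule ccontr)
    assume "\<not> coprime d p"
    hence "p dvd d" using p by (metis coprime_commute prime_imp_coprime)
    hence "p dvd p^n + 1" using dv by (rule dvd_trans)
    moreover have "p dvd p^n" using n by simp
    ultimately have "p dvd 1" by (metis dvd_add_right_iff)
    thus False using p by simp
  qed
  have ordk: "multiplicity 2 (ord r p) = k" if r: "prime r" "odd r" "r dvd d" for r
  proof -
    obtain c where "d = r * c" using r(3) by blast
    hence rp: "coprime r p" using cop by simp
    have "int r dvd int (p ^ n + 1)" using dvd_trans[OF r(3) dv] by (simp only: int_dvd_int_iff)
    hence rd: "int r dvd int p ^ n + 1" by (simp add: add.commute)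
    hence c1: "[int p ^ n = -1] (mod int r)" by (simp add: cong_iff_dvd_diff)
    hence "[(int p ^ n)^2 = (-1)^2] (mod int r)" by (rule cong_pow)
    hence "[int (p ^ (2*n)) = int 1] (mod int r)" by (simp add: power_mult mult.commute)
    hence "[p ^ (2*n) = 1] (mod r)" using cong_int_iff by blast
    hence "ord r p dvd 2*n" by (simp add: ord_divides')
    then obtain m where m: "2*n = ord r p * m" by blast
    have om: "odd m"
    proof
      assume "even m"
      then obtain m2 where "m = 2*m2" by blast
      hence "n = ord r p * m2" using m by simp
      hence "[p ^ n = 1] (mod r)" by (simp add: ord_divides')
      hence "[int (p ^ n) = int 1] (mod int r)" using cong_int_iff by blast
      hence c2: "[int p ^ n = 1] (mod int r)" by simp
      have "[1 = -1] (mod int r)" using cong_trans[OF cong_sym[OF c2] c1] by simp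
      hence "int r dvd 2" by (simp add: cong_iff_dvd_diff)
      hence "int r dvd int 2" by simp
      hence "r dvd 2" by (simp only: int_dvd_int_iff)
      hence "r \<le> 2" by (simp add: dvd_imp_le)
      moreover have "r \<ge> 2" using r prime_ge_2_nat by blast
      ultimately have "r = 2" by simp
      thus False using r by simp
    qed
    have o0: "ord r p \<noteq> 0" using rp by (simp add: ord_eq_0)
    have "multiplicity 2 (2*n) = Suc (multiplicity 2 n)"
      by (rule multiplicity_times_same) (use n in auto)
    also have "multiplicity 2 (2*n) = multiplicity 2 (ord r p) + multiplicity 2 m"
      unfolding m using o0 om by (intro prime_elem_multiplicity_mult_distrib) (auto intro: odd_pos)
    also have "multiplicity 2 m = 0" using om by (simp add: not_dvd_imp_multiplicity_0)
    finally show ?thesis unfolding k_def by simp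
  qed
  have two1: "multiplicity 2 d \<le> multiplicity 2 (p + 1)" if "p > 2" "k = 1"
  proof (rule ccontr)
    define s where "s = multiplicity 2 (p+1)"
    assume "\<not> ?thesis"
    hence "s + 1 \<le> multiplicity 2 d" unfolding s_def by simp
    hence "2^(s+1) dvd d" by (rule multiplicity_dvd')
    hence "2^(s+1) dvd p^n+1" using dv by (rule dvd_trans)
    hence "int (2^(s+1)) dvd int (p^n+1)" by (simp only: int_dvd_int_iff)
    hence A: "(2::int)^(s+1) dvd int p^n+1" by (simp add: add.commute)
    have on: "odd n" using that multiplicity_eq_zero_iff[of n 2] n unfolding k_def by simp
    have op: "odd p" using p that prime_odd_nat by auto
    have "[int p ^ n + 1 = int p + 1] (mod 2 * (int p + 1))" by (rule odd_exp_cong[OF op on])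
    moreover have "2^s dvd p+1" unfolding s_def by (rule multiplicity_dvd)
    hence "int (2^s) dvd int (p+1)" by (simp only: int_dvd_int_iff)
    hence "(2::int)^s dvd int p+1" by (simp add: add.commute)
    hence "(2::int)^(s+1) dvd 2 * (int p + 1)" by (simp only: power_Suc Suc_eq_plus1[symmetric] mult_dvd_mono dvd_refl)
    ultimately have "[int p ^ n + 1 = int p + 1] (mod 2^(s+1))" using cong_dvd_modulus by blast
    hence "(2::int)^(s+1) dvd int p + 1" using A cong_dvd_iff by blast
    hence "int (2^(s+1)) dvd int (p + 1)" by (simp add: add.commute)
    hence "2^(s+1) dvd p + 1" by (simp only: int_dvd_int_iff)
    hence "s+1 \<le> s" unfolding s_def by (intro multiplicity_geI) auto
    thus False by simp
  qed
  have two2: "multiplicity 2 d \<le> 1" if "p > 2" "k > 1"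
  proof (rule ccontr)
    assume "\<not> ?thesis"
    hence "2 \<le> multiplicity 2 d" by simp
    hence "2^2 dvd d" by (rule multiplicity_dvd')
    hence "4 dvd d" by simp
    hence "4 dvd p^n+1" using dv by (rule dvd_trans)
    hence "int 4 dvd int (p^n+1)" by (simp only: int_dvd_int_iff)
    hence A: "(4::int) dvd int p^n+1" by (simp add: add.commute)
    have en: "even n" using that multiplicity_gt_zero_iff[of n 2] n unfolding k_def by simp
    have op: "odd p" using p that prime_odd_nat by auto
    have "[int p ^ n = 1] (mod 4)" by (rule even_exp_cong[OF op en])
    hence "(4::int) dvd int p ^ n - 1" by (simp add: cong_iff_dvd_diff)
    hence "(4::int) dvd (int p^n+1) - (int p ^ n - 1)" using A by (rule dvd_diff[rotated])
    thus False by simp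
  qed
  show ?thesis unfolding Uk_def k_def[symmetric]
    using d cop ordk two1 two2 by auto
qed



lemma dir2:
  fixes p d k :: nat
  assumes p: "prime p" and k: "k \<ge> 1" and dU: "d \<in> Uk p k"
  shows "\<exists>n>0. d dvd p^n + 1"
proof -
  have d0: "d > 0" and cop: "coprime d p"
    and ordk: "\<And>r. prime r \<Longrightarrow> odd r \<Longrightarrow> r dvd d \<Longrightarrow> multiplicity 2 (ord r p) = k"
    and t1: "p > 2 \<Longrightarrow> k = 1 \<Longrightarrow> multiplicity 2 d \<le> multiplicity 2 (p + 1)"
    and t2: "p > 2 \<Longrightarrow> k > 1 \<Longrightarrow> multiplicity 2 d \<le> 1"
    using dU unfolding Uk_def by auto
  define a where "a = multiplicity 2 d"
  obtain m where dm: "d = 2^a * m" and om: "\<not> 2 dvd m"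
    unfolding a_def using multiplicity_decompose'[of d 2] d0 by auto
  have m0: "m > 0" using om by (cases m) auto
  define F :: nat where "F = fact m"
  have F0: "F \<noteq> 0" unfolding F_def by simp
  define b where "b = multiplicity 2 F"
  have nu: "\<not> is_unit (2::nat)" by simp
  obtain w where Fw: "F = 2^b * w" and ow: "\<not> 2 dvd w"
    using multiplicity_decompose'[OF F0 nu] unfolding b_def by blast
  define x where "x = int p ^ (2^(k-1) * w)"
  have xr: "int r dvd x + 1" if r: "prime r" "r dvd m" for r
  proof -
    have rd: "r dvd d" using r(2) dm by simp
    have ro: "odd r" using r(2) om by (metis dvd_trans)
    obtain c where "d = r * c" using rd by blast
    hence rp: "coprime r p" using cop by simp
    define oo0 where "oo0 = ord r p"
    have o0: "oo0 > 0" unfolding oo0_def using rp by simp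
    have mo: "multiplicity 2 oo0 = k" unfolding oo0_def using ordk r ro rd by blast
    have "oo0 dvd totient r" unfolding oo0_def using rp by (rule order_divides_totient)
    hence "oo0 \<le> totient r" using r prime_gt_0_nat by (intro dvd_imp_le) auto
    also have "\<dots> \<le> r" by (rule totient_le)
    also have "r \<le> m" using r(2) m0 by (rule dvd_imp_le)
    finally have "oo0 dvd F" unfolding F_def using o0 by (intro dvd_fact) auto
    obtain q where oo: "oo0 = 2^k * q" and oo': "\<not> 2 dvd q"
      using multiplicity_decompose'[of oo0 2] o0 mo nu by (metis not_gr0)
    have "q dvd 2^b * w" using \<open>oo0 dvd F\<close> Fw oo by (metis dvd_mult_right)
    moreover have "coprime q (2^b)" using oo' by (simp add: coprime_commute)
    ultimately have qw: "q dvd w" using coprime_dvd_mult_right_iff by blast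
    have k2: "(2::nat)^k = 2 * 2^(k-1)" using k by (metis Suc_diff_le diff_Suc_1 power_Suc)
    have "oo0 dvd 2 * (2^(k-1) * w)" using oo qw k2 by (simp add: mult_dvd_mono)
    hence "[p ^ (2 * (2^(k-1) * w)) = 1] (mod r)" unfolding oo0_def by (simp add: ord_divides')
    hence "[int (p ^ (2 * (2^(k-1) * w))) = int 1] (mod int r)" using cong_int_iff by blast
    moreover have "x^2 = int (p ^ (2 * (2^(k-1) * w)))"
      unfolding x_def of_nat_power power_mult[symmetric] by (simp add: ac_simps)
    ultimately have "[x^2 = 1] (mod int r)" by simp
    hence "int r dvd x^2 - 1" by (simp add: cong_iff_dvd_diff)
    moreover have "x^2 - 1 = (x - 1) * (x + 1)" by (simp add: algebra_simps power2_eq_square)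
    ultimately have "int r dvd (x - 1) * (x + 1)" by simp
    moreover have "prime (int r)" using r by simp
    ultimately have "int r dvd x - 1 \<or> int r dvd x + 1" using prime_dvd_mult_iff by blast
    moreover have "\<not> int r dvd x - 1"
    proof
      assume "int r dvd x - 1"
      hence "[x = 1] (mod int r)" by (simp add: cong_iff_dvd_diff)
      hence "[int (p ^ (2^(k-1) * w)) = int 1] (mod int r)" unfolding x_def by simp
      hence "[p ^ (2^(k-1) * w) = 1] (mod r)" using cong_int_iff by blast
      hence "oo0 dvd 2^(k-1) * w" unfolding oo0_def by (simp add: ord_divides')
      hence "2 * 2^(k-1) dvd 2^(k-1) * w" using oo k2 by (metis dvd_mult_left)
      hence "2 dvd w" by simp
      thus False using ow by simp
    qed
    ultimately show ?thesis by blast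
  qed
  have "int m dvd x^m + 1" using L[of m x] om xr by auto
  define n where "n = 2^(k-1) * w * m"
  have xn: "x^m + 1 = int (p^n + 1)" unfolding x_def n_def by (simp add: power_mult)
  have mdv: "m dvd p^n + 1" using \<open>int m dvd x^m + 1\<close> unfolding xn by (simp only: int_dvd_int_iff)
  have n0: "n > 0" unfolding n_def using ow m0 by (cases w) auto
  have adv: "2^a dvd p^n + 1"
  proof (cases "p = 2")
    case True
    hence "a = 0" unfolding a_def using cop by (simp add: not_dvd_imp_multiplicity_0)
    thus ?thesis by simp
  next
    case False
    hence p2: "p > 2" using p prime_ge_2_nat by (metis le_neq_implies_less)
    have op: "odd p" using p False prime_odd_nat p2 by auto
    show ?thesis
    proof (cases "k = 1")
      case True
      have "2^a dvd p + 1" using t1[OF p2 True] unfolding a_def by (rule multiplicity_dvd')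
      moreover have "odd n" unfolding n_def using True ow om by simp
      hence "int p + 1 dvd int p ^ n + 1" by (rule odd_pow_plus1)
      hence "int (p + 1) dvd int (p ^ n + 1)" by (simp add: add.commute)
      hence "p + 1 dvd p^n+1" by (simp only: int_dvd_int_iff)
      ultimately show ?thesis by (rule dvd_trans)
    next
      case False
      hence "a \<le> 1" using t2[OF p2] k unfolding a_def by simp
      hence "2^a dvd (2::nat)" by (cases a) auto
      moreover have "even (p^n + 1)" using op by simp
      ultimately show ?thesis by (metis dvd_trans)
    qed
  qed
  have "coprime (2^a) m" using om by simp
  hence "d dvd p^n + 1" unfolding dm using divides_mult[OF adv mdv] by blast
  thus ?thesis using n0 by blast
qed

theorem lemma2:
  fixes p :: nat
  assumes "prime p"
  shows "U p = (\<Union>k\<in>{1..}. Uk p k)"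
proof
  show "U p \<subseteq> (\<Union>k\<in>{1..}. Uk p k)"
  proof
    fix d assume "d \<in> U p"
    then obtain n where "d > 0" "n > 0" "d dvd p^n+1" unfolding U_def by auto
    hence "d \<in> Uk p (multiplicity 2 n + 1)" using dir1 assms by blast
    thus "d \<in> (\<Union>k\<in>{1..}. Uk p k)" by auto
  qed
next
  show "(\<Union>k\<in>{1..}. Uk p k) \<subseteq> U p"
  proof
    fix d assume "d \<in> (\<Union>k\<in>{1..}. Uk p k)"
    then obtain k where "k \<ge> 1" "d \<in> Uk p k" by auto
    moreover hence "d > 0" unfolding Uk_def by auto
    ultimately show "d \<in> U p" using dir2[OF assms] unfolding U_def by blast
  qed
qed

end
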